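(* Let $G$ be a median graph in $\mathcal{U}_3$ with $n\ge 3$ vertices and $v_0$ its unique vertex lying in every majority halfspace. Let $u,v$ be vertices different from $v_0$ with $L_{v_0,u}\ne L_{v_0,v}$ and $L_{v_0,u}\cap L_{v_0,v}\neq\emptyset$, and let $m=m(u,v,v_0)$ be the median of $u,v,v_0$ (the unique vertex of $I(u,v)\cap I(v,v_0)\cap I(v_0,u)$). Then $m\ne v_0$ and $L_{v_0,m}=L_{v_0,u}\cap L_{v_0,v}$.
   Context: Graphs are finite, simple, connected, undirected; $d$ is shortest-path distance; $I(u,v)=\{x:d(u,x)+d(x,v)=d(u,v)\}$; a graph is median if every triple $x,y,z$ has $|I(x,y)\cap I(y,z)\cap I(z,x)|=1$. $\Theta$-classes: classes of the reflexive–transitive closure of the relation on edges "opposite edges of a 4-cycle"; deleting a $\Theta$-class $E_i$ of a median graph leaves two components with vertex sets (halfspaces) $H_i',H_i''$. $\mathcal{U}_3$ is the family of median graphs with $n$ vertices in which every $\Theta$-class satisfies $\min\{|H_i'|,|H_i''|\}<n/3$; the larger halfspace is the majority halfspace. For $u\ne v$, the ladder set $L_{u,v}$ is the set of $\Theta$-classes $E_i$ such that $u,v$ lie in different halfspaces of $E_i$ and $u$ is an endpoint of an edge of $E_i$. *)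

theory Defs
  imports Main
begin

definition graph :: "'a set \<Rightarrow> ('a \<Rightarrow> 'a \<Rightarrow> bool) \<Rightarrow> bool" where
  "graph V E \<longleftrightarrow> finite V \<and> V \<noteq> {} \<and>
     (\<forall>a b. E a b \<longrightarrow> a \<in> V \<and> b \<in> V \<and> a \<noteq> b \<and> E b a) \<and>
     (\<forall>x\<in>V. \<forall>y\<in>V. E\<^sup>*\<^sup>* x y)"

definition gdist :: "('a \<Rightarrow> 'a \<Rightarrow> bool) \<Rightarrow> 'a \<Rightarrow> 'a \<Rightarrow> nat" where
  "gdist E u v = (LEAST k. (E ^^ k) u v)"

definition interval :: "'a set \<Rightarrow> ('a \<Rightarrow> 'a \<Rightarrow> bool) \<Rightarrow> 'a \<Rightarrow> 'a \<Rightarrow> 'a set" where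
  "interval V E u v = {x \<in> V. gdist E u x + gdist E x v = gdist E u v}"

definition median_graph :: "'a set \<Rightarrow> ('a \<Rightarrow> 'a \<Rightarrow> bool) \<Rightarrow> bool" where
  "median_graph V E \<longleftrightarrow> graph V E \<and>
     (\<forall>x\<in>V. \<forall>y\<in>V. \<forall>z\<in>V.
        card (interval V E x y \<inter> interval V E y z \<inter> interval V E z x) = 1)"

definition edges :: "('a \<Rightarrow> 'a \<Rightarrow> bool) \<Rightarrow> 'a set set" where
  "edges E = {{a, b} | a b. E a b}"

definition opposite :: "('a \<Rightarrow> 'a \<Rightarrow> bool) \<Rightarrow> ('a set \<times> 'a set) set" where
  "opposite E = {({a, b}, {c, d}) | a b c d.
      distinct [a, b, c, d] \<and> E a b \<and> E b c \<and> E c d \<and> E d a}"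

definition Theta :: "('a \<Rightarrow> 'a \<Rightarrow> bool) \<Rightarrow> ('a set \<times> 'a set) set" where
  "Theta E = (opposite E)\<^sup>* \<inter> (edges E \<times> edges E)"

definition theta_classes :: "('a \<Rightarrow> 'a \<Rightarrow> bool) \<Rightarrow> 'a set set set" where
  "theta_classes E = edges E // Theta E"

definition del_class :: "('a \<Rightarrow> 'a \<Rightarrow> bool) \<Rightarrow> 'a set set \<Rightarrow> 'a \<Rightarrow> 'a \<Rightarrow> bool" where
  "del_class E F a b \<longleftrightarrow> E a b \<and> {a, b} \<notin> F"

definition halfspace_of :: "'a set \<Rightarrow> ('a \<Rightarrow> 'a \<Rightarrow> bool) \<Rightarrow> 'a set set \<Rightarrow> 'a \<Rightarrow> 'a set" where
  "halfspace_of V E F x = {y \<in> V. (del_class E F)\<^sup>*\<^sup>* x y}"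

definition halfspaces :: "'a set \<Rightarrow> ('a \<Rightarrow> 'a \<Rightarrow> bool) \<Rightarrow> 'a set set \<Rightarrow> 'a set set" where
  "halfspaces V E F = halfspace_of V E F ` V"

definition U3 :: "'a set \<Rightarrow> ('a \<Rightarrow> 'a \<Rightarrow> bool) \<Rightarrow> bool" where
  "U3 V E \<longleftrightarrow> median_graph V E \<and>
     (\<forall>F \<in> theta_classes E. 3 * Min (card ` halfspaces V E F) < card V)"

definition majority_halfspace :: "'a set \<Rightarrow> ('a \<Rightarrow> 'a \<Rightarrow> bool) \<Rightarrow> 'a set set \<Rightarrow> 'a set" where
  "majority_halfspace V E F =
     (THE H. H \<in> halfspaces V E F \<and> (\<forall>H' \<in> halfspaces V E F. H' \<noteq> H \<longrightarrow> card H' < card H))"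

definition ladder :: "'a set \<Rightarrow> ('a \<Rightarrow> 'a \<Rightarrow> bool) \<Rightarrow> 'a \<Rightarrow> 'a \<Rightarrow> 'a set set set" where
  "ladder V E u v = {F \<in> theta_classes E.
      halfspace_of V E F u \<noteq> halfspace_of V E F v \<and> (\<exists>e \<in> F. u \<in> e)}"

end

theory Submission
  imports Defs
begin

locale mg =
  fixes V :: "'a set" and E :: "'a \<Rightarrow> 'a \<Rightarrow> bool"
  assumes mg: "median_graph V E"
begin

abbreviation d where "d \<equiv> gdist E"

lemma gr: "graph V E" using mg unfolding median_graph_def by blast

lemma Esym: "E a b \<Longrightarrow> E b a" using gr unfolding graph_def by blast
lemma EV1: "E a b \<Longrightarrow> a \<in> V" using gr unfolding graph_def by blast
lemma EV2: "E a b \<Longrightarrow> b \<in> V" using gr unfolding graph_def by blast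
lemma Eneq: "E a b \<Longrightarrow> a \<noteq> b" using gr unfolding graph_def by blast

lemma conn: "x \<in> V \<Longrightarrow> y \<in> V \<Longrightarrow> \<exists>k. (E ^^ k) x y"
  using gr unfolding graph_def by (meson rtranclp_imp_relpowp)

lemma dpath: "x \<in> V \<Longrightarrow> y \<in> V \<Longrightarrow> (E ^^ d x y) x y"
  unfolding gdist_def using conn by (meson LeastI_ex)

lemma dle: "(E ^^ k) x y \<Longrightarrow> d x y \<le> k"
  unfolding gdist_def by (rule Least_le)

lemma d0[simp]: "d x x = 0"
  using dle[of 0 x x] by simp

lemma d0E: "x \<in> V \<Longrightarrow> y \<in> V \<Longrightarrow> d x y = 0 \<Longrightarrow> x = y"
  using dpath[of x y] by simp

lemma pow_sym: "(E ^^ k) x y \<Longrightarrow> (E ^^ k) y x"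
proof (induction k arbitrary: x y)
  case 0 then show ?case by simp
next
  case (Suc k)
  from Suc.prems obtain w where "(E ^^ k) x w" "E w y" by (rule relpowp_Suc_E)
  then show ?case using Suc.IH relpowp_Suc_I2 Esym by metis
qed

lemma dsym: "x \<in> V \<Longrightarrow> y \<in> V \<Longrightarrow> d x y = d y x"
  by (meson antisym dle dpath pow_sym)

lemma tri: "x \<in> V \<Longrightarrow> y \<in> V \<Longrightarrow> z \<in> V \<Longrightarrow> d x z \<le> d x y + d y z"
  by (meson dle dpath relpowp_trans)

lemma dE1: "E x y \<Longrightarrow> d x y = 1"
proof -
  assume e: "E x y"
  have "d x y \<le> 1" using dle[of 1 x y] e by (metis relpowp_1)
  moreover have "d x y \<noteq> 0" using d0E e EV1 EV2 Eneq by blast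
  ultimately show ?thesis by simp
qed

lemma d1E: "x \<in> V \<Longrightarrow> y \<in> V \<Longrightarrow> d x y = 1 \<Longrightarrow> E x y"
  using dpath[of x y] by (metis relpowp_1)

lemma dstep: "x \<in> V \<Longrightarrow> y \<in> V \<Longrightarrow> d x y = Suc k \<Longrightarrow> \<exists>w. E x w \<and> d w y = k"
proof -
  assume x: "x \<in> V" and y: "y \<in> V" and k: "d x y = Suc k"
  then obtain w where w: "E x w" "(E ^^ k) w y" using dpath[OF x y] by (metis relpowp_Suc_E2)
  have "d w y \<le> k" using w dle by blast
  moreover have "d x y \<le> d x w + d w y" using tri x y EV2 w by blast
  ultimately show ?thesis using dE1 w k by (intro exI[of _ w]) auto
qed

lemma adj: "E x y \<Longrightarrow> z \<in> V \<Longrightarrow> d z y \<le> d z x + 1"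
  using tri[of z x y] dE1 EV1 EV2 by fastforce

lemma median: "x \<in> V \<Longrightarrow> y \<in> V \<Longrightarrow> z \<in> V \<Longrightarrow>
   \<exists>m. interval V E x y \<inter> interval V E y z \<inter> interval V E z x = {m}"
  using mg unfolding median_graph_def by (meson card_1_singletonE)

lemma bip: "E a b \<Longrightarrow> x \<in> V \<Longrightarrow> d x a \<noteq> d x b"
proof
  assume e: "E a b" and x: "x \<in> V" and eq: "d x a = d x b"
  have a: "a \<in> V" and b: "b \<in> V" using e EV1 EV2 by auto
  obtain m where m: "interval V E x a \<inter> interval V E a b \<inter> interval V E b x = {m}"
    using median[OF x a b] by blast
  hence mI: "m \<in> V" "d x m + d m a = d x a" "d a m + d m b = d a b" "d b m + d m x = d b x"
    unfolding interval_def by auto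
  have "d a b = 1" using dE1 e by simp
  hence "d a m = 0 \<or> d m b = 0" using mI by linarith
  hence "m = a \<or> m = b" using mI d0E a b by metis
  thus False
  proof
    assume "m = a"
    hence "d b a + d a x = d b x" using mI by simp
    thus False using eq dsym[OF a b] dsym[OF a x] dsym[OF b x] \<open>d a b = 1\<close> by linarith
  next
    assume "m = b"
    hence "d x b + d b a = d x a" using mI by simp
    thus False using eq dsym[OF a b] \<open>d a b = 1\<close> by linarith
  qed
qed

lemma bip2: "E a b \<Longrightarrow> x \<in> V \<Longrightarrow> d x b = d x a + 1 \<or> d x a = d x b + 1"
proof -
  assume e: "E a b" and x: "x \<in> V"
  show ?thesis using bip[OF e x] adj[OF e x] adj[OF Esym[OF e] x] by linarith
qed


lemma adj': "E x y \<Longrightarrow> z \<in> V \<Longrightarrow> d y z \<le> d x z + 1"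
  using adj[of x y z] dsym EV1 EV2 by metis

definition W where "W a b = {x \<in> V. d x a < d x b}"

lemma sq1:
  assumes dist: "distinct [a,b,c,e]" and ab: "E a b" and bc: "E b c" and ce: "E c e" and ea: "E e a"
    and x: "x \<in> V" and lt: "d x a < d x b"
  shows "d x e < d x c"
proof (rule ccontr)
  assume nl: "\<not> d x e < d x c"
  have a: "a \<in> V" and b: "b \<in> V" and c: "c \<in> V" and e: "e \<in> V"
    using ab bc ce EV1 EV2 by auto
  have xb: "d x b = d x a + 1" using bip2[OF ab x] lt by linarith
  have xe: "d x e = d x c + 1" using bip2[OF ce x] nl by linarith
  have "d x e \<le> d x a + 1" using adj[OF Esym[OF ea] x] .
  moreover have "d x b \<le> d x c + 1" using adj[OF Esym[OF bc] x] .
  ultimately have xc: "d x c = d x a" and xe2: "d x e = d x a + 1" using xb xe by linarith+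
  have dab: "d a b = 1" "d b a = 1" "d a e = 1" "d e a = 1" "d b c = 1" "d c b = 1" "d c e = 1" "d e c = 1"
    using dE1 ab bc ce ea Esym by auto
  have "d b e \<le> d b a + d a e" using tri[OF b a e] .
  moreover have "d b e \<noteq> 0" using d0E[OF b e] dist by auto
  moreover have "d b e \<noteq> 1"
  proof
    assume "d b e = 1"
    hence "E b e" using d1E b e by blast
    thus False using bip[OF _ x] xb xe2 by metis
  qed
  ultimately have dbe: "d b e = 2" using dab by linarith
  obtain m where m: "interval V E x b \<inter> interval V E b e \<inter> interval V E e x = {m}"
    using median[OF x b e] by blast
  have A: "a \<in> interval V E x b \<inter> interval V E b e \<inter> interval V E e x"
  proof -
    have h1: "d x a + d a b = d x b" using dab xb by linarith
    have h2: "d b a + d a e = d b e" using dab dbe by linarith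
    have h3: "d e a + d a x = d e x" using dab xe2 dsym[OF x a] dsym[OF x e] by linarith
    show ?thesis unfolding interval_def by (simp add: a h1 h2 h3)
  qed
  have C: "c \<in> interval V E x b \<inter> interval V E b e \<inter> interval V E e x"
  proof -
    have h1: "d x c + d c b = d x b" using dab xb xc by linarith
    have h2: "d b c + d c e = d b e" using dab dbe by linarith
    have h3: "d e c + d c x = d e x" using dab xe2 xc dsym[OF x c] dsym[OF x e] by linarith
    show ?thesis unfolding interval_def by (simp add: c h1 h2 h3)
  qed
  have "a = m" using A unfolding m by simp
  moreover have "c = m" using C unfolding m by simp
  ultimately have "a = c" by simp
  thus False using dist by simp
qed

lemma sqW:
  assumes dist: "distinct [a,b,c,e]" and ab: "E a b" and bc: "E b c" and ce: "E c e" and ea: "E e a"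
  shows "W a b = W e c"
proof -
  have d2: "distinct [e,c,b,a]" using dist by auto
  show ?thesis unfolding W_def
    using sq1[OF dist ab bc ce ea] sq1[OF d2 Esym[OF ce] Esym[OF bc] Esym[OF ab] Esym[OF ea]]
    by auto
qed

lemma Wcompl: "E a b \<Longrightarrow> W b a = V - W a b"
  unfolding W_def using bip by fastforce

lemma Wself: "E a b \<Longrightarrow> a \<in> W a b"
  unfolding W_def using dE1 EV1 by fastforce

lemma dcross:
  assumes ab: "E a b" and pq: "E p q" and p: "p \<in> W a b" and q: "q \<in> W b a"
  shows "d p a = d q b" "d p b = d p a + 1" "d q a = d q b + 1"
proof -
  have pV: "p \<in> V" "q \<in> V" "a \<in> V" "b \<in> V" using p q ab EV1 EV2 unfolding W_def by auto
  show 1: "d p b = d p a + 1" using bip2[OF ab pV(1)] p unfolding W_def by auto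
  show 2: "d q a = d q b + 1" using bip2[OF ab pV(2)] q unfolding W_def by auto
  have "d q a \<le> d p a + 1" using adj'[OF pq pV(3)] .
  moreover have "d p b \<le> d q b + 1" using adj'[OF Esym[OF pq] pV(4)] .
  ultimately show "d p a = d q b" using 1 2 by linarith
qed

lemma cross_ind:
  assumes ab: "E a b"
  shows "\<forall>p q. E p q \<and> p \<in> W a b \<and> q \<in> W b a \<and> d p a = k \<longrightarrow>
           W p q = W a b \<and> ({a,b},{p,q}) \<in> (opposite E)\<^sup>*"
proof (induction k)
  case 0
  have aV: "a \<in> V" "b \<in> V" using ab EV1 EV2 by auto
  show ?case
  proof (intro allI impI)
    fix p q assume h: "E p q \<and> p \<in> W a b \<and> q \<in> W b a \<and> d p a = 0"
    have pV: "p \<in> V" "q \<in> V" using h unfolding W_def by auto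
    have "p = a" using d0E[OF pV(1) aV(1)] h by simp
    moreover have "q = b" using dcross(1)[of a b p q] h ab d0E[OF pV(2) aV(2)] by auto
    ultimately show "W p q = W a b \<and> ({a,b},{p,q}) \<in> (opposite E)\<^sup>*" by auto
  qed
next
  case (Suc k)
  show ?case
  proof (intro allI impI)
    fix p q assume h: "E p q \<and> p \<in> W a b \<and> q \<in> W b a \<and> d p a = Suc k"
    hence pq: "E p q" and p: "p \<in> W a b" and q: "q \<in> W b a" and pa: "d p a = Suc k" by auto
    have V: "p \<in> V" "q \<in> V" "a \<in> V" "b \<in> V" using pq ab EV1 EV2 by auto
    note dc = dcross[OF ab pq p q]
    obtain p' where pp': "E p p'" and p'a: "d p' a = k" using dstep[OF V(1) V(3) pa] by blast
    have p'V: "p' \<in> V" using pp' EV2 by auto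
    have "d p b \<le> d p' b + 1" using adj'[OF Esym[OF pp'] V(4)] .
    hence p'b: "d p' b = k + 1" using bip2[OF ab p'V] dc pa p'a by linarith
    have p'W: "p' \<in> W a b" unfolding W_def using p'V p'b p'a by auto
    have qb: "d q b = Suc k" and qa: "d q a = k + 2" using dc pa by auto
    have "d q p' \<le> d q p + d p p'" using tri[OF V(2) V(1) p'V] .
    moreover have "d q p = 1" "d p p' = 1" using dE1 pq pp' Esym by auto
    moreover have "d q p' \<noteq> 0"
    proof
      assume "d q p' = 0" hence "q = p'" using d0E[OF V(2) p'V] by simp
      thus False using qa p'a by simp
    qed
    moreover have "d q p' \<noteq> 1"
    proof
      assume "d q p' = 1"
      hence "E q p'" using d1E V(2) p'V by blast
      hence "d q a \<le> d p' a + 1" using adj'[of p' q a] Esym V by blast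
      thus False using qa p'a by linarith
    qed
    ultimately have qp': "d q p' = 2" by linarith
    obtain y where y: "interval V E q p' \<inter> interval V E p' b \<inter> interval V E b q = {y}"
      using median[OF V(2) p'V V(4)] by blast
    hence yI: "y \<in> V" "d q y + d y p' = d q p'" "d p' y + d y b = d p' b" "d b y + d y q = d b q"
      unfolding interval_def by auto
    have "d q y \<noteq> 0"
    proof
      assume "d q y = 0" hence "y = q" using d0E V(2) yI(1) by blast
      thus False using yI qp' p'b qb dsym[OF V(2) p'V] by simp
    qed
    moreover have "d y p' \<noteq> 0"
    proof
      assume "d y p' = 0" hence "y = p'" using d0E p'V yI(1) by blast
      thus False using yI qp' p'b qb dsym[OF V(2) V(4)] dsym[OF p'V V(4)] dsym[OF V(2) p'V] by simp
    qed
    ultimately have "d q y = 1" "d y p' = 1" using yI(2) qp' by linarith+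
    hence qy: "E q y" and yp': "E y p'" using d1E V(2) p'V yI(1) by blast+
    have yb: "d y b = k" using yI(3) dsym[OF p'V yI(1)] \<open>d y p' = 1\<close> p'b by linarith
    have "d q a \<le> d y a + 1" using adj'[OF Esym[OF qy] V(3)] .
    hence ya: "d y a \<ge> k + 1" using qa by linarith
    have "d y b < d y a" using ya yb by linarith
    hence yW: "y \<in> W b a" unfolding W_def using yI(1) by simp
    have pre: "E p' y \<and> p' \<in> W a b \<and> y \<in> W b a \<and> d p' a = k"
      using Esym[OF yp'] p'W yW p'a by simp
    have IH: "W p' y = W a b \<and> ({a,b},{p',y}) \<in> (opposite E)\<^sup>*"
      using mp[OF spec[OF spec[OF Suc.IH, of p'], of y] pre] .
    have ynp: "y \<noteq> p" using yb dc pa by auto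
    have qnp': "q \<noteq> p'" using qa p'a by auto
    have dist: "distinct [p,q,y,p']" using ynp qnp' Eneq pq qy yp' pp' by auto
    have w: "W p q = W p' y" using sqW[OF dist pq qy yp' Esym[OF pp']] .
    have "({y,p'},{p,q}) \<in> opposite E"
      unfolding opposite_def using dist yp' Esym[OF pp'] pq qy by auto
    hence o: "({p',y},{p,q}) \<in> opposite E" by (simp add: insert_commute)
    have "({a,b},{p,q}) \<in> (opposite E)\<^sup>*" using rtrancl_into_rtrancl[OF conjunct2[OF IH] o] .
    moreover have "W p q = W a b" using w IH by simp
    ultimately show "W p q = W a b \<and> ({a,b},{p,q}) \<in> (opposite E)\<^sup>*" by simp
  qed
qed

lemma cross:
  assumes "E a b" "E p q" "p \<in> W a b" "q \<in> W b a"
  shows "W p q = W a b" "({a,b},{p,q}) \<in> (opposite E)\<^sup>*"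
proof -
  have pre: "E p q \<and> p \<in> W a b \<and> q \<in> W b a \<and> d p a = d p a" using assms by simp
  have "W p q = W a b \<and> ({a,b},{p,q}) \<in> (opposite E)\<^sup>*"
    using mp[OF spec[OF spec[OF cross_ind[OF assms(1), of "d p a"], of p], of q] pre] .
  thus "W p q = W a b" "({a,b},{p,q}) \<in> (opposite E)\<^sup>*" by simp_all
qed


definition Cr where "Cr a b = {{p,q} | p q. E p q \<and> p \<in> W a b \<and> q \<in> W b a}"

lemma WV: "W a b \<subseteq> V" unfolding W_def by auto

lemma Cr_sub: "Cr b a \<subseteq> Cr a b"
proof
  fix e assume "e \<in> Cr b a"
  then obtain p q where h: "e = {p,q}" "E p q" "p \<in> W b a" "q \<in> W a b" unfolding Cr_def by auto
  hence "e = {q,p}" "E q p" using Esym by (auto simp: insert_commute)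
  thus "e \<in> Cr a b" unfolding Cr_def using h by blast
qed

lemma Cr_sym: "Cr b a = Cr a b"
  using Cr_sub[of b a] Cr_sub[of a b] by (rule equalityI)

lemma Cr_step:
  assumes ab: "E a b" and e: "e \<in> Cr a b" and o: "(e, e') \<in> opposite E"
  shows "e' \<in> Cr a b"
proof -
  obtain p q where e1: "e = {p,q}" and pq: "E p q" and p: "p \<in> W a b" and q: "q \<in> W b a"
    using e unfolding Cr_def by auto
  obtain a1 b1 c1 d1 where o1: "e = {a1,b1}" "e' = {c1,d1}" and dist: "distinct [a1,b1,c1,d1]"
    and E1: "E a1 b1" "E b1 c1" "E c1 d1" "E d1 a1"
    using o unfolding opposite_def by auto
  have Wab: "W p q = W a b" using cross(1)[OF ab pq p q] .
  have cases: "(p = a1 \<and> q = b1) \<or> (p = b1 \<and> q = a1)" using e1 o1(1) by (auto simp: doubleton_eq_iff)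
  thus ?thesis
  proof
    assume h: "p = a1 \<and> q = b1"
    have "W a1 b1 = W d1 c1" using sqW[OF dist E1] .
    hence w1: "W d1 c1 = W a b" using Wab h by simp
    have "d1 \<in> W a b" using Wself[OF Esym[OF E1(3)]] w1 by simp
    moreover have "c1 \<in> W b a"
    proof -
      have "c1 \<in> W c1 d1" using Wself[OF E1(3)] .
      also have "W c1 d1 = V - W d1 c1" using Wcompl[OF Esym[OF E1(3)]] .
      also have "\<dots> = W b a" using w1 Wcompl[OF ab] by simp
      finally show ?thesis .
    qed
    moreover have "e' = {d1,c1}" using o1 by (simp add: insert_commute)
    ultimately show ?thesis unfolding Cr_def using Esym[OF E1(3)] by blast
  next
    assume h: "p = b1 \<and> q = a1"
    have dist2: "distinct [b1,a1,d1,c1]" using dist by auto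
    have "W b1 a1 = W c1 d1" using sqW[OF dist2 Esym[OF E1(1)] Esym[OF E1(4)] Esym[OF E1(3)] Esym[OF E1(2)]] .
    hence w1: "W c1 d1 = W a b" using Wab h by simp
    have "c1 \<in> W a b" using Wself[OF E1(3)] w1 by simp
    moreover have "d1 \<in> W b a"
    proof -
      have "d1 \<in> W d1 c1" using Wself[OF Esym[OF E1(3)]] .
      also have "W d1 c1 = V - W c1 d1" using Wcompl[OF E1(3)] .
      also have "\<dots> = W b a" using w1 Wcompl[OF ab] by simp
      finally show ?thesis .
    qed
    ultimately show ?thesis unfolding Cr_def using E1(3) o1(2) by blast
  qed
qed

lemma Theta_Cr:
  assumes ab: "E a b" and r: "({a,b}, e) \<in> (opposite E)\<^sup>*"
  shows "e \<in> Cr a b"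
  using r
proof (induction rule: rtrancl_induct)
  case base
  have "a \<in> W a b" using Wself[OF ab] .
  moreover have "b \<in> W b a" using Wself[OF Esym[OF ab]] .
  ultimately show ?case unfolding Cr_def using ab by blast
next
  case (step y z)
  then show ?case using Cr_step[OF ab] by blast
qed

lemma theta_class:
  assumes F: "F \<in> theta_classes E"
  shows "\<exists>a b. E a b \<and> F = Cr a b"
proof -
  obtain e0 where e0: "e0 \<in> edges E" and Fd: "F = Theta E `` {e0}"
    using F unfolding theta_classes_def by (auto elim: quotientE)
  obtain a b where ab: "E a b" and e0d: "e0 = {a,b}" using e0 unfolding edges_def by auto
  have "F = Cr a b"
  proof
    show "F \<subseteq> Cr a b"
    proof
      fix e assume "e \<in> F"
      hence "({a,b}, e) \<in> (opposite E)\<^sup>*" using Fd e0d unfolding Theta_def by auto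
      thus "e \<in> Cr a b" using Theta_Cr[OF ab] by blast
    qed
  next
    show "Cr a b \<subseteq> F"
    proof
      fix e assume "e \<in> Cr a b"
      then obtain p q where e: "e = {p,q}" and pq: "E p q" and p: "p \<in> W a b" and q: "q \<in> W b a"
        unfolding Cr_def by auto
      have "({a,b},{p,q}) \<in> (opposite E)\<^sup>*" using cross(2)[OF ab pq p q] .
      moreover have "{p,q} \<in> edges E" "{a,b} \<in> edges E" using pq ab unfolding edges_def by auto
      ultimately have "(e0, e) \<in> Theta E" unfolding Theta_def using e e0d by auto
      thus "e \<in> F" using Fd by auto
    qed
  qed
  thus ?thesis using ab by blast
qed

lemma WabWba: "E a b \<Longrightarrow> x \<in> W a b \<Longrightarrow> x \<notin> W b a"
  using Wcompl by blast

lemma side_pres: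
  assumes ab: "E a b" and dc: "del_class E (Cr a b) y z"
  shows "y \<in> W a b \<longleftrightarrow> z \<in> W a b"
proof -
  have yz: "E y z" and n: "{y,z} \<notin> Cr a b" using dc unfolding del_class_def by auto
  have V: "y \<in> V" "z \<in> V" using yz EV1 EV2 by auto
  show ?thesis
  proof
    assume y: "y \<in> W a b"
    show "z \<in> W a b"
    proof (rule ccontr)
      assume "z \<notin> W a b"
      hence "z \<in> W b a" using Wcompl[OF ab] V by blast
      hence "{y,z} \<in> Cr a b" unfolding Cr_def using yz y by blast
      thus False using n by simp
    qed
  next
    assume z: "z \<in> W a b"
    show "y \<in> W a b"
    proof (rule ccontr)
      assume "y \<notin> W a b"
      hence "y \<in> W b a" using Wcompl[OF ab] V by blast
      hence "{z,y} \<in> Cr a b" unfolding Cr_def using Esym[OF yz] z by blast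
      thus False using n by (simp add: insert_commute)
    qed
  qed
qed

lemma side_rt:
  assumes ab: "E a b" and r: "(del_class E (Cr a b))\<^sup>*\<^sup>* x y"
  shows "x \<in> W a b \<longleftrightarrow> y \<in> W a b"
  using r
proof (induction rule: rtranclp_induct)
  case base then show ?case by simp
next
  case (step y z) then show ?case using side_pres[OF ab] by blast
qed

lemma path_to:
  assumes ab: "E a b"
  shows "\<forall>y. y \<in> W a b \<and> d y a = n \<longrightarrow>
     (del_class E (Cr a b))\<^sup>*\<^sup>* y a \<and> (del_class E (Cr a b))\<^sup>*\<^sup>* a y"
proof (induction n)
  case 0
  have aV: "a \<in> V" using ab EV1 by auto
  show ?case
  proof (intro allI impI)
    fix y assume h: "y \<in> W a b \<and> d y a = 0"
    have "y \<in> V" using h WV by auto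
    hence "y = a" using d0E[OF _ aV] h by simp
    thus "(del_class E (Cr a b))\<^sup>*\<^sup>* y a \<and> (del_class E (Cr a b))\<^sup>*\<^sup>* a y" by simp
  qed
next
  case (Suc n)
  show ?case
  proof (intro allI impI)
    fix y assume h: "y \<in> W a b \<and> d y a = Suc n"
    have V: "y \<in> V" "a \<in> V" "b \<in> V" using h WV ab EV1 EV2 by auto
    obtain z where yz: "E y z" and za: "d z a = n" using dstep[OF V(1) V(2)] h by blast
    have zV: "z \<in> V" using yz EV2 by auto
    have "d y b \<le> d z b + 1" using adj'[OF Esym[OF yz] V(3)] .
    moreover have "d y b = d y a + 1" using bip2[OF ab V(1)] h unfolding W_def by auto
    ultimately have "d z a < d z b" using za h by linarith
    hence zW: "z \<in> W a b" unfolding W_def using zV by simp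
    have nc: "\<And>u w. u \<in> W a b \<Longrightarrow> w \<in> W a b \<Longrightarrow> {u,w} \<notin> Cr a b"
    proof
      fix u w assume u: "u \<in> W a b" and w: "w \<in> W a b" and c: "{u,w} \<in> Cr a b"
      then obtain p q where "{u,w} = {p,q}" "p \<in> W a b" "q \<in> W b a" unfolding Cr_def by auto
      hence "u \<in> W b a \<or> w \<in> W b a" by (auto simp: doubleton_eq_iff)
      thus False using u w WabWba[OF ab] by blast
    qed
    have d1: "del_class E (Cr a b) y z" unfolding del_class_def using yz nc[OF _ zW] h by blast
    have d2: "del_class E (Cr a b) z y" unfolding del_class_def using Esym[OF yz] nc[OF zW] h by blast
    have pre: "z \<in> W a b \<and> d z a = n" using zW za by simp
    have IH: "(del_class E (Cr a b))\<^sup>*\<^sup>* z a \<and> (del_class E (Cr a b))\<^sup>*\<^sup>* a z"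
      using mp[OF spec[OF Suc.IH, of z] pre] .
    show "(del_class E (Cr a b))\<^sup>*\<^sup>* y a \<and> (del_class E (Cr a b))\<^sup>*\<^sup>* a y"
      using IH d1 d2 by (meson converse_rtranclp_into_rtranclp rtranclp.rtrancl_into_rtrancl)
  qed
qed

lemma path_to': "E a b \<Longrightarrow> y \<in> W a b \<Longrightarrow>
     (del_class E (Cr a b))\<^sup>*\<^sup>* y a \<and> (del_class E (Cr a b))\<^sup>*\<^sup>* a y"
  using path_to by blast

lemma hs:
  assumes ab: "E a b" and x: "x \<in> V"
  shows "halfspace_of V E (Cr a b) x = (if x \<in> W a b then W a b else W b a)"
proof -
  have ba: "E b a" using Esym[OF ab] .
  have A: "halfspace_of V E (Cr a b) x = W a b" if xw: "x \<in> W a b" and ab: "E a b" for a b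
  proof
    show "halfspace_of V E (Cr a b) x \<subseteq> W a b"
      unfolding halfspace_of_def using side_rt[OF ab] xw by blast
  next
    show "W a b \<subseteq> halfspace_of V E (Cr a b) x"
    proof
      fix y assume y: "y \<in> W a b"
      have "(del_class E (Cr a b))\<^sup>*\<^sup>* x a" using path_to'[OF ab xw] by blast
      moreover have "(del_class E (Cr a b))\<^sup>*\<^sup>* a y" using path_to'[OF ab y] by blast
      ultimately have "(del_class E (Cr a b))\<^sup>*\<^sup>* x y" by simp
      thus "y \<in> halfspace_of V E (Cr a b) x" unfolding halfspace_of_def using y WV by auto
    qed
  qed
  show ?thesis
  proof (cases "x \<in> W a b")
    case True thus ?thesis using A[OF True ab] by simp
  next
    case False
    hence "x \<in> W b a" using Wcompl[OF ab] x by blast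
    thus ?thesis using A[OF _ ba] False Cr_sym by simp
  qed
qed

lemma hs_eq:
  assumes ab: "E a b" and x: "x \<in> V" and y: "y \<in> V"
  shows "halfspace_of V E (Cr a b) x = halfspace_of V E (Cr a b) y \<longleftrightarrow> (x \<in> W a b \<longleftrightarrow> y \<in> W a b)"
proof -
  have "W a b \<noteq> W b a" using Wself[OF ab] WabWba[OF ab] by blast
  thus ?thesis using hs[OF ab x] hs[OF ab y] by auto
qed

lemma exit_edge:
  assumes y: "y \<in> V" and yS: "y \<in> S"
  shows "\<forall>z. z \<in> V \<and> z \<notin> S \<and> d z y = n \<longrightarrow>
     (\<exists>q p. E q p \<and> q \<notin> S \<and> p \<in> S \<and> d z q + 1 + d p y = d z y)"
proof (induction n)
  case 0
  show ?case
  proof (intro allI impI)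
    fix z assume h: "z \<in> V \<and> z \<notin> S \<and> d z y = 0"
    hence "z = y" using d0E[OF _ y] by simp
    thus "\<exists>q p. E q p \<and> q \<notin> S \<and> p \<in> S \<and> d z q + 1 + d p y = d z y" using h yS by simp
  qed
next
  case (Suc n)
  show ?case
  proof (intro allI impI)
    fix z assume h: "z \<in> V \<and> z \<notin> S \<and> d z y = Suc n"
    obtain w where zw: "E z w" and wy: "d w y = n" using dstep[OF _ y] h by blast
    have wV: "w \<in> V" using zw EV2 by auto
    show "\<exists>q p. E q p \<and> q \<notin> S \<and> p \<in> S \<and> d z q + 1 + d p y = d z y"
    proof (cases "w \<in> S")
      case True
      have "d z z + 1 + d w y = d z y" using wy h by simp
      thus ?thesis using zw h True by blast
    next
      case False
      have pre: "w \<in> V \<and> w \<notin> S \<and> d w y = n" using wV False wy by simp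
      obtain q p where qp: "E q p" "q \<notin> S" "p \<in> S" and eq: "d w q + 1 + d p y = d w y"
        using mp[OF spec[OF Suc.IH, of w] pre] by blast
      have V: "q \<in> V" "p \<in> V" "z \<in> V" using qp EV1 EV2 h by auto
      have "d z q \<le> d z w + d w q" using tri[OF V(3) wV V(1)] .
      moreover have "d z w = 1" using dE1[OF zw] .
      moreover have "d z y \<le> d z q + d q p + d p y"
        using tri[OF V(3) V(1) y] tri[OF V(1) V(2) y] by linarith
      moreover have "d q p = 1" using dE1[OF qp(1)] .
      ultimately have "d z q + 1 + d p y = d z y" using eq wy h by linarith
      thus ?thesis using qp by blast
    qed
  qed
qed

lemma conv:
  assumes ab: "E a b" and x: "x \<in> W a b" and y: "y \<in> W a b" and z: "z \<in> V"
    and I: "d x z + d z y = d x y"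
  shows "z \<in> W a b"
proof (rule ccontr)
  assume nz: "z \<notin> W a b"
  have yV: "y \<in> V" "x \<in> V" using x y WV by auto
  have pre: "z \<in> V \<and> z \<notin> W a b \<and> d z y = d z y" using z nz by simp
  obtain q p where qp: "E q p" "q \<notin> W a b" "p \<in> W a b" and eq: "d z q + 1 + d p y = d z y"
    using mp[OF spec[OF exit_edge[OF yV(1) y, of "d z y"], of z] pre] by blast
  have V: "q \<in> V" "p \<in> V" using qp EV1 EV2 by auto
  have q: "q \<in> W b a" using Wcompl[OF ab] qp V by blast
  have "W p q = W a b" using cross(1)[OF ab Esym[OF qp(1)] qp(3) q] .
  hence "d x p < d x q" using x unfolding W_def by auto
  moreover have "d x y \<le> d x p + d p y" using tri[OF yV(2) V(2) yV(1)] .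
  moreover have "d x q \<le> d x z + d z q" using tri[OF yV(2) z V(1)] .
  ultimately show False using I eq by linarith
qed

lemma conv_bool:
  assumes ab: "E a b" and x: "x \<in> V" and y: "y \<in> V" and z: "z \<in> V"
    and I: "d x z + d z y = d x y" and s: "x \<in> W a b \<longleftrightarrow> y \<in> W a b"
  shows "z \<in> W a b \<longleftrightarrow> x \<in> W a b"
proof (cases "x \<in> W a b")
  case True
  thus ?thesis using conv[OF ab True _ z I] s by blast
next
  case False
  have "x \<in> W b a" "y \<in> W b a" using False s Wcompl[OF ab] x y by blast+
  hence "z \<in> W b a" using conv[OF Esym[OF ab] _ _ z I] by blast
  thus ?thesis using False WabWba[OF Esym[OF ab]] by blast
qed

end

theorem mainTheorem13:
  fixes V :: "'a set" and E :: "'a \<Rightarrow> 'a \<Rightarrow> bool" and v0 u v m :: 'a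
  assumes "U3 V E"
    and "card V \<ge> 3"
    and "v0 \<in> V"
    and "\<forall>F \<in> theta_classes E. v0 \<in> majority_halfspace V E F"
    and "u \<in> V" and "v \<in> V" and "u \<noteq> v0" and "v \<noteq> v0"
    and "ladder V E v0 u \<noteq> ladder V E v0 v"
    and "ladder V E v0 u \<inter> ladder V E v0 v \<noteq> {}"
    and "m \<in> interval V E u v \<inter> interval V E v v0 \<inter> interval V E v0 u"
  shows "m \<noteq> v0 \<and> ladder V E v0 m = ladder V E v0 u \<inter> ladder V E v0 v"
proof -
  have mgr: "median_graph V E" using assms(1) unfolding U3_def by simp
  interpret mg V E by (rule mg.intro[OF mgr])
  have mV: "m \<in> V" and I1: "gdist E u m + gdist E m v = gdist E u v"
    and I2: "gdist E v m + gdist E m v0 = gdist E v v0"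
    and I3: "gdist E v0 m + gdist E m u = gdist E v0 u"
    using assms(11) unfolding interval_def by auto
  have key: "(halfspace_of V E F v0 \<noteq> halfspace_of V E F m) \<longleftrightarrow>
      (halfspace_of V E F v0 \<noteq> halfspace_of V E F u \<and> halfspace_of V E F v0 \<noteq> halfspace_of V E F v)"
    if F: "F \<in> theta_classes E" for F
  proof -
    obtain a b where ab: "E a b" and Fd: "F = Cr a b" using theta_class[OF F] by blast
    have c1: "(u \<in> W a b \<longleftrightarrow> v \<in> W a b) \<Longrightarrow> (m \<in> W a b \<longleftrightarrow> u \<in> W a b)"
      using conv_bool[OF ab assms(5) assms(6) mV I1] by blast
    have c2: "(v \<in> W a b \<longleftrightarrow> v0 \<in> W a b) \<Longrightarrow> (m \<in> W a b \<longleftrightarrow> v \<in> W a b)"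
      using conv_bool[OF ab assms(6) assms(3) mV I2] by blast
    have c3: "(v0 \<in> W a b \<longleftrightarrow> u \<in> W a b) \<Longrightarrow> (m \<in> W a b \<longleftrightarrow> v0 \<in> W a b)"
      using conv_bool[OF ab assms(3) assms(5) mV I3] by blast
    show ?thesis unfolding Fd
      using hs_eq[OF ab assms(3) mV] hs_eq[OF ab assms(3) assms(5)] hs_eq[OF ab assms(3) assms(6)]
        c1 c2 c3 by blast
  qed
  have L: "ladder V E v0 m = ladder V E v0 u \<inter> ladder V E v0 v"
    unfolding ladder_def using key by blast
  obtain F where "F \<in> ladder V E v0 u \<inter> ladder V E v0 v" using assms(10) by blast
  hence "F \<in> ladder V E v0 m" using L by simp
  hence "m \<noteq> v0" unfolding ladder_def by auto
  thus ?thesis using L by simp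
qed

end
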